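(* Let $A=\{a_n\}_{n\in\mathbb Z}\subset\mathbb R$ be an almost periodic set (multiplicities counted). Then there is $k_2\in\mathbb N$ such that for every $h>0$ and all $x_1,x_2\in\mathbb R$, $$\big|\#(A\cap[x_1,x_1+h))-\#(A\cap[x_2,x_2+h))\big|\le k_2,$$ and for every $x\in\mathbb R$, $h>0$, $M\in\mathbb N$, $$\Big|\#(A\cap[x,x+h))-\tfrac1M\,\#(A\cap[x,x+Mh))\Big|\le k_2.$$
   Context: A discrete locally finite multiset $A=\{a_n\}_{n\in\mathbb Z}\subset\mathbb R$ (a point may occur several times in the sequence) is called almost periodic if for every $\varepsilon>0$ the set of $\varepsilon$-almost periods $$E_\varepsilon=\{\tau\in\mathbb R:\ \exists\text{ a bijection }\sigma:\mathbb Z\to\mathbb Z\text{ with }\sup_n|a_n+\tau-a_{\sigma(n)}|<\varepsilon\}$$ is relatively dense, i.e. there is $L_\varepsilon>0$ such that $E_\varepsilon\cap(x,x+L_\varepsilon)\neq\emptyset$ for every $x\in\mathbb R$. For a set $H\subset\mathbb R$, $\#(A\cap H)$ denotes the number of indices $n$ with $a_n\in H$ (points counted with multiplicity). *)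

theory Defs
  imports Complex_Main
begin

text \<open>A multiset A = {a_n}, n in Z, is represented by the sequence a :: int => real.
  Locally finite: every bounded interval contains a_n for only finitely many indices n.\<close>
definition locally_finite_seq :: "(int \<Rightarrow> real) \<Rightarrow> bool" where
  "locally_finite_seq a \<longleftrightarrow> (\<forall>x y. finite {n. a n \<in> {x..y}})"

definition count_in :: "(int \<Rightarrow> real) \<Rightarrow> real set \<Rightarrow> nat" where
  "count_in a H = card {n. a n \<in> H}"

definition almost_period :: "(int \<Rightarrow> real) \<Rightarrow> real \<Rightarrow> real \<Rightarrow> bool" where
  "almost_period a \<epsilon> \<tau> \<longleftrightarrow>
     (\<exists>\<sigma>::int \<Rightarrow> int. bij \<sigma> \<and>
        bdd_above (range (\<lambda>n. \<bar>a n + \<tau> - a (\<sigma> n)\<bar>)) \<and>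
        (SUP n. \<bar>a n + \<tau> - a (\<sigma> n)\<bar>) < \<epsilon>)"

definition relatively_dense :: "real set \<Rightarrow> bool" where
  "relatively_dense E \<longleftrightarrow> (\<exists>L>0. \<forall>x. E \<inter> {x<..<x+L} \<noteq> {})"

definition almost_periodic_seq :: "(int \<Rightarrow> real) \<Rightarrow> bool" where
  "almost_periodic_seq a \<longleftrightarrow> locally_finite_seq a \<and>
     (\<forall>\<epsilon>>0. relatively_dense {\<tau>. almost_period a \<epsilon> \<tau>})"

end

theory Submission
  imports Defs
begin

lemma fin_count:
  assumes "locally_finite_seq a" "S \<subseteq> {x..y}"
  shows "finite {n. a n \<in> S}"
proof -
  have "finite {n. a n \<in> {x..y}}" using assms(1) unfolding locally_finite_seq_def by blast
  then show ?thesis by (rule finite_subset[rotated]) (use assms(2) in auto)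
qed

lemma count_mono:
  assumes "locally_finite_seq a" "S \<subseteq> T" "T \<subseteq> {x..y}"
  shows "count_in a S \<le> count_in a T"
  unfolding count_in_def
  by (rule card_mono[OF fin_count[OF assms(1,3)]]) (use assms(2) in auto)

lemma transport:
  assumes "locally_finite_seq a" "T \<subseteq> {x..y}" "inj \<sigma>"
    "\<And>n. a n \<in> S \<Longrightarrow> a (\<sigma> n) \<in> T"
  shows "count_in a S \<le> count_in a T"
  unfolding count_in_def
proof (rule card_inj_on_le[where f=\<sigma>])
  show "inj_on \<sigma> {n. a n \<in> S}" using assms(3) by (simp add: inj_on_def inj_def)
  show "\<sigma> ` {n. a n \<in> S} \<subseteq> {n. a n \<in> T}" using assms(4) by auto
  show "finite {n. a n \<in> T}" by (rule fin_count[OF assms(1,2)])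
qed

lemma ap_pointwise:
  assumes "almost_period a 1 \<tau>"
  shows "\<exists>\<sigma>. bij \<sigma> \<and> (\<forall>n. \<bar>a n + \<tau> - a (\<sigma> n)\<bar> < 1)"
proof -
  obtain \<sigma> where s: "bij \<sigma>" "bdd_above (range (\<lambda>n. \<bar>a n + \<tau> - a (\<sigma> n)\<bar>))"
    "(SUP n. \<bar>a n + \<tau> - a (\<sigma> n)\<bar>) < 1"
    using assms unfolding almost_period_def by blast
  have "\<forall>n. \<bar>a n + \<tau> - a (\<sigma> n)\<bar> < 1"
  proof
    fix n
    have "\<bar>a n + \<tau> - a (\<sigma> n)\<bar> \<le> (SUP n. \<bar>a n + \<tau> - a (\<sigma> n)\<bar>)"
      by (rule cSUP_upper[OF _ s(2)]) simp
    then show "\<bar>a n + \<tau> - a (\<sigma> n)\<bar> < 1" using s(3) by linarith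
  qed
  then show ?thesis using s(1) by blast
qed

lemma count_split:
  assumes "locally_finite_seq a" "x \<le> y" "y \<le> z"
  shows "count_in a {x..<z} = count_in a {x..<y} + count_in a {y..<z}"
proof -
  have e: "{n. a n \<in> {x..<z}} = {n. a n \<in> {x..<y}} \<union> {n. a n \<in> {y..<z}}"
    using assms by auto
  show ?thesis unfolding count_in_def e
  proof (rule card_Un_disjoint)
    show "finite {n. a n \<in> {x..<y}}" by (rule fin_count[OF assms(1), of _ x y]) auto
    show "finite {n. a n \<in> {y..<z}}" by (rule fin_count[OF assms(1), of _ y z]) auto
  qed auto
qed

theorem proposition2:
  fixes a :: "int \<Rightarrow> real"
  assumes "almost_periodic_seq a"
  shows "\<exists>k2::nat.
    (\<forall>h>0. \<forall>x1 x2.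
        \<bar>real (count_in a {x1..<x1+h}) - real (count_in a {x2..<x2+h})\<bar> \<le> real k2) \<and>
    (\<forall>x. \<forall>h>0. \<forall>M::nat. M \<ge> 1 \<longrightarrow>
        \<bar>real (count_in a {x..<x+h}) - real (count_in a {x..<x + real M * h}) / real M\<bar> \<le> real k2)"
proof -
  have lf: "locally_finite_seq a" using assms unfolding almost_periodic_seq_def by blast
  have "relatively_dense {\<tau>. almost_period a 1 \<tau>}"
    using assms unfolding almost_periodic_seq_def by simp
  then obtain L where L: "L > 0" "\<And>x. {\<tau>. almost_period a 1 \<tau>} \<inter> {x<..<x+L} \<noteq> {}"
    unfolding relatively_dense_def by blast
  have P: "\<exists>\<tau> \<sigma>. x < \<tau> \<and> \<tau> < x + L \<and> bij \<sigma> \<and> (\<forall>n. \<bar>a n + \<tau> - a (\<sigma> n)\<bar> < 1)" for x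
  proof -
    from L(2)[of x] obtain \<tau> where "almost_period a 1 \<tau>" "x < \<tau>" "\<tau> < x + L" by auto
    then show ?thesis using ap_pointwise by blast
  qed
  define B where "B = count_in a {-1..2*L+2}"
  have U: "count_in a {x..x+L+1} \<le> B" for x
  proof -
    obtain \<tau> \<sigma> where t: "-x < \<tau>" "\<tau> < -x + L" "bij \<sigma>" "\<forall>n. \<bar>a n + \<tau> - a (\<sigma> n)\<bar> < 1"
      using P[of "-x"] by blast
    show ?thesis unfolding B_def
    proof (rule transport[OF lf order_refl])
      show "inj \<sigma>" using t(3) bij_is_inj by blast
      fix n assume "a n \<in> {x..x+L+1}"
      then show "a (\<sigma> n) \<in> {-1..2*L+2}" using t(1,2) t(4)[rule_format, of n] by auto
    qed
  qed
  have C1: "count_in a {x1..<x1+h} \<le> count_in a {x2..<x2+h} + 2*B" if "h > 0" for x1 x2 h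
  proof -
    obtain \<tau> \<sigma> where t: "x2-x1-L < \<tau>" "\<tau> < x2-x1" "bij \<sigma>" "\<forall>n. \<bar>a n + \<tau> - a (\<sigma> n)\<bar> < 1"
      using P[of "x2-x1-L"] by auto
    have "count_in a {x1..<x1+h} \<le> count_in a {x2-L-1..<x2+h+1}"
    proof (rule transport[OF lf])
      show "{x2-L-1..<x2+h+1} \<subseteq> {x2-L-1..x2+h+1}" by auto
      show "inj \<sigma>" using t(3) bij_is_inj by blast
      fix n assume "a n \<in> {x1..<x1+h}"
      then show "a (\<sigma> n) \<in> {x2-L-1..<x2+h+1}" using t(1,2) t(4)[rule_format, of n] by auto
    qed
    also have "\<dots> = count_in a {x2-L-1..<x2} + count_in a {x2..<x2+h+1}"
      by (rule count_split[OF lf]) (use L(1) that in auto)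
    also have "count_in a {x2..<x2+h+1} = count_in a {x2..<x2+h} + count_in a {x2+h..<x2+h+1}"
      by (rule count_split[OF lf]) (use L(1) that in auto)
    also have "count_in a {x2-L-1..<x2} \<le> B"
      using count_mono[OF lf, of "{x2-L-1..<x2}" "{x2-L-1..x2-L-1+L+1}"] U[of "x2-L-1"] by force
    also have "count_in a {x2+h..<x2+h+1} \<le> B"
      using count_mono[OF lf, of "{x2+h..<x2+h+1}" "{x2+h..x2+h+L+1}"] U[of "x2+h"] L(1) by force
    finally show ?thesis by simp
  qed
  have D: "\<bar>real (count_in a {x1..<x1+h}) - real (count_in a {x2..<x2+h})\<bar> \<le> real (2*B)"
    if "h > 0" for x1 x2 h
    using C1[OF that, of x1 x2] C1[OF that, of x2 x1] by linarith
  have S: "\<bar>real M * real (count_in a {x..<x+h}) - real (count_in a {x..<x + real M * h})\<bar>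
      \<le> real M * real (2*B)" if "h > 0" for x h M
  proof (induction M)
    case 0
    then show ?case by (simp add: count_in_def)
  next
    case (Suc M)
    have "count_in a {x..<x + real (Suc M) * h} =
        count_in a {x..<x + real M * h} + count_in a {x + real M * h..<x + real (Suc M) * h}"
      by (rule count_split[OF lf]) (use that in \<open>auto simp: algebra_simps\<close>)
    moreover have "x + real (Suc M) * h = (x + real M * h) + h" by (simp add: algebra_simps)
    ultimately have e: "count_in a {x..<x + real (Suc M) * h} =
        count_in a {x..<x + real M * h} + count_in a {x + real M * h..<(x + real M * h) + h}"
      by (simp only:)
    show ?case using Suc.IH D[OF that, of x "x + real M * h"]
      unfolding e by (simp add: algebra_simps)
  qed
  show ?thesis
  proof (intro exI[of _ "2*B"] conjI allI impI)
    fix h :: real and x1 x2 assume "h > 0"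
    then show "\<bar>real (count_in a {x1..<x1+h}) - real (count_in a {x2..<x2+h})\<bar> \<le> real (2*B)"
      by (rule D)
  next
    fix x h :: real and M :: nat assume h: "h > 0" and M: "M \<ge> 1"
    have Mp: "real M > 0" using M by simp
    have "\<bar>real (count_in a {x..<x+h}) - real (count_in a {x..<x + real M * h}) / real M\<bar>
        = \<bar>real M * real (count_in a {x..<x+h}) - real (count_in a {x..<x + real M * h})\<bar> / real M"
      using Mp by (simp add: field_simps)
    also have "\<dots> \<le> real M * real (2*B) / real M"
      by (rule divide_right_mono[OF S[OF h]]) simp
    also have "\<dots> = real (2*B)" using Mp by simp
    finally show "\<bar>real (count_in a {x..<x+h}) - real (count_in a {x..<x + real M * h}) / real M\<bar> \<le> real (2*B)" .
  qed
qed

end
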